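(* Let $(s,t)\in\mathbb{C}^2$ with $s\neq 0$. Then: (a) For all $z,w\in\mathbb{C}$, $\overline{K^{(s,t)}(z,w)}=c\,K^{(\overline{s},-t)}(w,z)$, where $c=1$ if $s+|s|\neq 0$ (i.e. $s$ is not a negative real number) and $c=-1$ if $s<0$. (b) For a fixed $w\in\mathbb{C}$, the function $K^{(s,t)}_w(z)=K^{(s,t)}(z,w)$ belongs to $F^2$ if and only if $|s|>|t|$.
   Context: $d\lambda(z)=\frac{1}{\pi}e^{-|z|^2}\,dA(z)$ is the Gaussian measure on $\mathbb{C}$ ($dA$ = area measure), and the Fock space is $F^2=L^2(\mathbb{C},d\lambda)\cap H(\mathbb{C})$, where $H(\mathbb{C})$ is the space of entire functions, with the inner product of $L^2(\mathbb{C},d\lambda)$. Complex square roots are principal: $\sqrt{z}=\sqrt{|z|}\,e^{i\theta/2}$ for $z=|z|e^{i\theta}$, $\theta\in(-\pi,\pi]$. For $(s,t)\in\mathbb{C}^2$ with $s\neq0$, $$K^{(s,t)}(z,w)=\frac{1}{\sqrt{s}}\exp\left[\frac{tz^2-\overline{t}\,\overline{w}^2+2z\overline{w}}{2s}\right],\qquad z,w\in\mathbb{C}.$$ *)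

theory Defs
  imports "HOL-Analysis.Analysis"
begin

definition gauss_measure :: "complex measure" where
  "gauss_measure = density lborel (\<lambda>z. ennreal (exp (- (cmod z)\<^sup>2) / pi))"

definition fock_space :: "(complex \<Rightarrow> complex) set" where
  "fock_space = {f. f holomorphic_on UNIV \<and> integrable gauss_measure (\<lambda>z. (cmod (f z))\<^sup>2)}"

definition Kst :: "complex \<Rightarrow> complex \<Rightarrow> complex \<Rightarrow> complex \<Rightarrow> complex" where
  "Kst s t z w = (1 / csqrt s) *
      exp ((t * z\<^sup>2 - cnj t * (cnj w)\<^sup>2 + 2 * z * cnj w) / (2 * s))"

end

theory Submission
  imports Defs "HOL-Probability.Probability"
begin

lemma nn_normal: "0 < \<sigma> \<Longrightarrow> (\<integral>\<^sup>+x. ennreal (normal_density \<mu> \<sigma> x) \<partial>lborel) = 1"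
  by (subst nn_integral_eq_integral) auto

lemma gauss1D:
  fixes \<alpha> \<beta> \<gamma> :: real
  assumes "\<alpha> < 0"
  shows "(\<integral>\<^sup>+x. ennreal (exp (\<alpha>*x\<^sup>2 + \<beta>*x + \<gamma>)) \<partial>lborel) = ennreal (sqrt(pi/(-\<alpha>)) * exp(\<gamma> - \<beta>\<^sup>2/(4*\<alpha>)))"
proof -
  define \<sigma> where "\<sigma> = sqrt (-1/(2*\<alpha>))"
  define \<mu> where "\<mu> = -\<beta>/(2*\<alpha>)"
  define K where "K = sqrt(pi/(-\<alpha>)) * exp(\<gamma> - \<beta>\<^sup>2/(4*\<alpha>))"
  have sp: "\<sigma> > 0" using assms by (simp add: \<sigma>_def)
  have s2: "\<sigma>\<^sup>2 = -1/(2*\<alpha>)" using assms by (simp add: \<sigma>_def)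
  have pa: "pi/(-\<alpha>) > 0" using assms by (intro divide_pos_pos) auto
  have K0: "K \<ge> 0" unfolding K_def using pa by (intro mult_nonneg_nonneg) auto
  have eq: "exp (\<alpha>*x\<^sup>2 + \<beta>*x + \<gamma>) = K * normal_density \<mu> \<sigma> x" for x
  proof -
    have s2': "2 * \<sigma>\<^sup>2 = -1/\<alpha>" using s2 by simp
    have "2 * pi * \<sigma>\<^sup>2 = pi * (2 * \<sigma>\<^sup>2)" by simp
    also have "\<dots> = pi/(-\<alpha>)" unfolding s2' by simp
    finally have a0: "2 * pi * \<sigma>\<^sup>2 = pi/(-\<alpha>)" .
    have a: "sqrt (2 * pi * \<sigma>\<^sup>2) = sqrt(pi/(-\<alpha>))" by (simp only: a0)
    have b0: "-(x - \<mu>)\<^sup>2/ (2 * \<sigma>\<^sup>2) = \<alpha> * (x - \<mu>)\<^sup>2" unfolding s2' using assms by simp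
    have b1: "\<alpha> * (x - \<mu>)\<^sup>2 = \<alpha>*x\<^sup>2 + \<beta>*x + \<gamma> - (\<gamma> - \<beta>\<^sup>2/(4*\<alpha>))"
      unfolding \<mu>_def using assms by (simp add: field_simps power2_eq_square)
    have c: "sqrt(pi/(-\<alpha>)) > 0" using pa by simp
    have X: "\<And>k E X :: real. k > 0 \<Longrightarrow> E > 0 \<Longrightarrow> X = k*E*(1/k*(X/E))" by simp
    show ?thesis unfolding normal_density_def K_def a b0 b1 exp_diff by (rule X[OF c]) simp
  qed
  have "(\<integral>\<^sup>+x. ennreal (exp (\<alpha>*x\<^sup>2 + \<beta>*x + \<gamma>)) \<partial>lborel) = (\<integral>\<^sup>+x. ennreal K * ennreal (normal_density \<mu> \<sigma> x) \<partial>lborel)"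
    by (simp add: eq ennreal_mult K0)
  also have "\<dots> = ennreal K * 1"
    by (subst nn_integral_cmult) (auto simp: nn_normal sp)
  finally show ?thesis by (simp add: K_def)
qed

lemma Ici_inf: "emeasure lborel {c::real..} = \<infinity>"
proof (rule ccontr)
  assume "emeasure lborel {c..} \<noteq> \<infinity>"
  then obtain r where r: "emeasure lborel {c..} = ennreal r" "r \<ge> 0"
    by (metis ennreal_cases infinity_ennreal_def)
  have "emeasure lborel {c..c + r + 1} \<le> emeasure lborel {c..}"
    by (rule emeasure_mono) auto
  then have "ennreal (r+1) \<le> ennreal r" using r by simp
  then show False using r by (simp add: ennreal_le_iff)
qed

lemma Iic_inf: "emeasure lborel {..c::real} = \<infinity>"
proof (rule ccontr)
  assume "emeasure lborel {..c} \<noteq> \<infinity>"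
  then obtain r where r: "emeasure lborel {..c} = ennreal r" "r \<ge> 0"
    by (metis ennreal_cases infinity_ennreal_def)
  have "emeasure lborel {c - r - 1..c} \<le> emeasure lborel {..c}"
    by (rule emeasure_mono) auto
  then have "ennreal (r+1) \<le> ennreal r" using r by simp
  then show False using r by (simp add: ennreal_le_iff)
qed

lemma lin_infinite:
  fixes \<alpha> \<beta> \<gamma> :: real
  assumes "\<alpha> \<ge> 0"
  shows "(\<integral>\<^sup>+x. ennreal (exp (\<alpha>*x\<^sup>2 + \<beta>*x + \<gamma>)) \<partial>lborel) = \<infinity>"
proof -
  define S where "S = (if \<beta> \<ge> 0 then {0::real..} else {..0})"
  have S: "emeasure lborel S = \<infinity>" by (simp add: S_def Ici_inf Iic_inf)
  have le: "ennreal (exp \<gamma>) * indicator S x \<le> ennreal (exp (\<alpha>*x\<^sup>2 + \<beta>*x + \<gamma>))" for x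
  proof (cases "x \<in> S")
    case True
    then have "\<beta>*x \<ge> 0" by (auto simp: S_def split: if_splits intro: mult_nonpos_nonpos)
    moreover have "\<alpha>*x\<^sup>2 \<ge> 0" using assms by simp
    ultimately show ?thesis using True by (simp add: ennreal_leI)
  qed simp
  have "(\<integral>\<^sup>+x. ennreal (exp \<gamma>) * indicator S x \<partial>lborel) = ennreal (exp \<gamma>) * emeasure lborel S"
    by (subst nn_integral_cmult_indicator) (auto simp: S_def)
  also have "\<dots> = \<infinity>" using S by (simp add: ennreal_mult_top)
  finally have I: "(\<integral>\<^sup>+x. ennreal (exp \<gamma>) * indicator S x \<partial>lborel) = \<infinity>" .
  have "(\<integral>\<^sup>+x. ennreal (exp \<gamma>) * indicator S x \<partial>lborel) \<le> (\<integral>\<^sup>+x. ennreal (exp (\<alpha>*x\<^sup>2 + \<beta>*x + \<gamma>)) \<partial>lborel)"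
    by (rule nn_integral_mono) (rule le)
  then show ?thesis unfolding I by (simp add: top_unique)
qed

lemma quad_inner:
  fixes A B C p q k x :: real
  assumes "C < 0"
  shows "(\<integral>\<^sup>+y. ennreal (exp (A*x\<^sup>2 + 2*B*x*y + C*y\<^sup>2 + p*x + q*y + k)) \<partial>lborel)
     = ennreal (sqrt(pi/(-C))) * ennreal (exp ((A - B\<^sup>2/C)*x\<^sup>2 + (p - B*q/C)*x + (k - q\<^sup>2/(4*C))))"
proof -
  have e: "A*x\<^sup>2 + 2*B*x*y + C*y\<^sup>2 + p*x + q*y + k = C*y\<^sup>2 + (2*B*x+q)*y + (A*x\<^sup>2+p*x+k)" for y
    by (simp add: algebra_simps)
  have f: "A*x\<^sup>2+p*x+k - (2*B*x+q)\<^sup>2/(4*C) = (A - B\<^sup>2/C)*x\<^sup>2 + (p - B*q/C)*x + (k - q\<^sup>2/(4*C))"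
    using assms by (simp add: field_simps power2_eq_square)
  have "pi/(-C) > 0" using assms by (intro divide_pos_pos) auto
  then show ?thesis unfolding e gauss1D[OF assms] f
    by (subst ennreal_mult) auto
qed

lemma quad_fin:
  fixes A B C p q k :: real
  shows "(\<integral>\<^sup>+x. (\<integral>\<^sup>+y. ennreal (exp (A*x\<^sup>2 + 2*B*x*y + C*y\<^sup>2 + p*x + q*y + k)) \<partial>lborel) \<partial>lborel) < (\<infinity>::ennreal)
     \<longleftrightarrow> (C < 0 \<and> A*C - B\<^sup>2 > 0)"
proof (cases "C < 0")
  case False
  have e: "A*x\<^sup>2 + 2*B*x*y + C*y\<^sup>2 + p*x + q*y + k = C*y\<^sup>2 + (2*B*x+q)*y + (A*x\<^sup>2+p*x+k)" for x y
    by (simp add: algebra_simps)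
  have "(\<integral>\<^sup>+x. (\<integral>\<^sup>+y. ennreal (exp (A*x\<^sup>2 + 2*B*x*y + C*y\<^sup>2 + p*x + q*y + k)) \<partial>lborel) \<partial>lborel)
      = (\<integral>\<^sup>+(x::real). (\<infinity>::ennreal) \<partial>lborel)"
    unfolding e using False by (simp add: lin_infinite)
  also have "\<dots> = (\<infinity>::ennreal)" by (simp add: nn_integral_cmult ennreal_mult_top)
  finally show ?thesis using False by simp
next
  case True
  define A' where "A' = A - B\<^sup>2/C"
  have "pi/(-C) > 0" using True by (intro divide_pos_pos) auto
  then have pc: "sqrt(pi/(-C)) > 0" by simp
  have eq1: "(\<integral>\<^sup>+x. (\<integral>\<^sup>+y. ennreal (exp (A*x\<^sup>2 + 2*B*x*y + C*y\<^sup>2 + p*x + q*y + k)) \<partial>lborel) \<partial>lborel)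
      = ennreal (sqrt(pi/(-C))) * (\<integral>\<^sup>+x. ennreal (exp (A'*x\<^sup>2 + (p - B*q/C)*x + (k - q\<^sup>2/(4*C)))) \<partial>lborel)"
    unfolding quad_inner[OF True] A'_def by (subst nn_integral_cmult) auto
  have AC: "A'*C = A*C - B\<^sup>2" using True by (simp add: A'_def field_simps)
  have "A' < 0 \<longleftrightarrow> 0 < A'*C" using True by (simp add: zero_less_mult_iff)
  with AC have iff: "A' < 0 \<longleftrightarrow> A*C - B\<^sup>2 > 0" by simp
  show ?thesis
  proof (cases "A' < 0")
    case True2: True
    have "(\<integral>\<^sup>+x. ennreal (exp (A'*x\<^sup>2 + (p - B*q/C)*x + (k - q\<^sup>2/(4*C)))) \<partial>lborel) < \<infinity>"
      unfolding gauss1D[OF True2] by simp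
    then have "ennreal (sqrt(pi/(-C))) * (\<integral>\<^sup>+x. ennreal (exp (A'*x\<^sup>2 + (p - B*q/C)*x + (k - q\<^sup>2/(4*C)))) \<partial>lborel) < \<infinity>"
      by (simp add: ennreal_mult_less_top)
    then show ?thesis using eq1 iff True2 True by simp
  next
    case False2: False
    have "(\<integral>\<^sup>+x. ennreal (exp (A'*x\<^sup>2 + (p - B*q/C)*x + (k - q\<^sup>2/(4*C)))) \<partial>lborel) = \<infinity>"
      using False2 by (intro lin_infinite) simp
    then have "ennreal (sqrt(pi/(-C))) * (\<integral>\<^sup>+x. ennreal (exp (A'*x\<^sup>2 + (p - B*q/C)*x + (k - q\<^sup>2/(4*C)))) \<partial>lborel) = \<infinity>"
      using pc True by (simp add: ennreal_mult_top)
    then show ?thesis using eq1 iff False2 True by simp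
  qed
qed

lemma Complex_eq': "Complex x y = complex_of_real x + \<i> * complex_of_real y"
  by (simp add: complex_eq_iff)

lemma meas_Complex[measurable]: "(\<lambda>p::real\<times>real. Complex (fst p) (snd p)) \<in> borel_measurable (lborel \<Otimes>\<^sub>M lborel)"
  unfolding Complex_eq' by measurable

lemma box_complex_pre: "(\<lambda>p::real\<times>real. Complex (fst p) (snd p)) -` box l u = box (Re l) (Re u) \<times> box (Im l) (Im u)"
  by (auto simp: box_def Basis_complex_def)

lemma lborel_complex: "(lborel::complex measure) = distr (lborel \<Otimes>\<^sub>M lborel) borel (\<lambda>p. Complex (fst p) (snd p))"
proof (rule lborel_eqI)
  fix l u :: complex assume le: "\<And>b. b \<in> Basis \<Longrightarrow> l \<bullet> b \<le> u \<bullet> b"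
  have "Re l \<le> Re u" "Im l \<le> Im u" using le[of 1] le[of \<i>] by (auto simp: Basis_complex_def)
  then show "emeasure (distr (lborel \<Otimes>\<^sub>M lborel) borel (\<lambda>p. Complex (fst p) (snd p))) (box l u) = (\<Prod>b\<in>Basis. (u - l) \<bullet> b)"
    by (simp add: emeasure_distr box_complex_pre space_pair_measure lborel.emeasure_pair_measure_Times Basis_complex_def ennreal_mult)
qed simp

lemma nn_complex:
  assumes f[measurable]: "f \<in> borel_measurable (borel :: complex measure)"
  shows "(\<integral>\<^sup>+z. f z \<partial>lborel) = (\<integral>\<^sup>+x. \<integral>\<^sup>+y. f (Complex x y) \<partial>lborel \<partial>lborel)"
proof -
  have m: "(\<lambda>p. f (Complex (fst p) (snd p))) \<in> borel_measurable (lborel \<Otimes>\<^sub>M lborel)"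
    using measurable_compose[OF meas_Complex f] by (simp add: o_def)
  have "(\<integral>\<^sup>+z. f z \<partial>lborel) = (\<integral>\<^sup>+p. f (Complex (fst p) (snd p)) \<partial>(lborel \<Otimes>\<^sub>M lborel))"
    by (subst lborel_complex) (simp add: nn_integral_distr)
  also have "\<dots> = (\<integral>\<^sup>+x. \<integral>\<^sup>+y. f (Complex x y) \<partial>lborel \<partial>lborel)"
    using lborel.nn_integral_fst[OF m] by simp
  finally show ?thesis .
qed


lemma cnj_exponent:
  "cnj ((t * z\<^sup>2 - cnj t * (cnj w)\<^sup>2 + 2 * z * cnj w) / (2 * s))
   = ((- t) * w\<^sup>2 - cnj (- t) * (cnj z)\<^sup>2 + 2 * w * cnj z) / (2 * cnj s)"
  by (simp add: algebra_simps)

lemma partA1: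
  assumes "s + of_real (cmod s) \<noteq> 0"
  shows "cnj (Kst s t z w) = Kst (cnj s) (- t) w z"
proof -
  have "s \<notin> \<real>\<^sub>\<le>\<^sub>0"
  proof
    assume "s \<in> \<real>\<^sub>\<le>\<^sub>0"
    then have "Re s \<le> 0" "Im s = 0" by (auto simp: complex_nonpos_Reals_iff)
    then have "s + of_real (cmod s) = 0" by (simp add: complex_eq_iff cmod_def)
    with assms show False by simp
  qed
  then have c1: "cnj (csqrt s) = csqrt (cnj s)" by (rule cnj_csqrt)
  have ce: "cnj (exp ((t * z\<^sup>2 - cnj t * (cnj w)\<^sup>2 + 2 * z * cnj w) / (2 * s)))
     = exp (((- t) * w\<^sup>2 - cnj (- t) * (cnj z)\<^sup>2 + 2 * w * cnj z) / (2 * cnj s))"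
    by (simp only: exp_cnj cnj_exponent)
  show ?thesis unfolding Kst_def complex_cnj_mult ce
    by (simp add: c1)
qed

lemma partA2:
  assumes "Im s = 0" "Re s < 0"
  shows "cnj (Kst s t z w) = - Kst (cnj s) (- t) w z"
proof -
  have cs: "cnj s = s" using assms by (simp add: complex_eq_iff)
  have c2: "cnj (csqrt s) = - csqrt (cnj s)" unfolding cs using assms by (simp add: complex_eq_iff)
  have ce: "cnj (exp ((t * z\<^sup>2 - cnj t * (cnj w)\<^sup>2 + 2 * z * cnj w) / (2 * s)))
     = exp (((- t) * w\<^sup>2 - cnj (- t) * (cnj z)\<^sup>2 + 2 * w * cnj z) / (2 * cnj s))"
    by (simp only: exp_cnj cnj_exponent)
  show ?thesis unfolding Kst_def complex_cnj_mult ce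
    by (simp add: c2)
qed

lemma normsq_exp: "(cmod (exp x / csqrt s))\<^sup>2 = exp (2 * Re x) / cmod s"
  by (simp add: norm_divide power_divide exp_double)

lemma gauss_sets: "sets gauss_measure = sets borel"
  by (simp add: gauss_measure_def)

lemma partB:
  fixes s t w :: complex
  assumes s0: "s \<noteq> 0"
  shows "(\<lambda>z. Kst s t z w) \<in> fock_space \<longleftrightarrow> cmod t < cmod s"
proof -
  define a where "a = t / (2 * s)"
  define b where "b = cnj w / s"
  define e where "e = - (cnj t * (cnj w)\<^sup>2) / (2 * s)"
  define G where "G z = 2 * Re (a*z\<^sup>2 + b*z + e) - (cmod z)\<^sup>2" for z
  define c where "c = 1 / (pi * cmod s)"
  have c0: "c > 0" using s0 by (simp add: c_def)
  have KE: "Kst s t z w = exp (a*z\<^sup>2 + b*z + e) / csqrt s" for z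
  proof -
    have "(t * z\<^sup>2 - cnj t * (cnj w)\<^sup>2 + 2 * z * cnj w) / (2 * s) = a*z\<^sup>2 + b*z + e"
      using s0 by (simp add: a_def b_def e_def field_simps)
    then show ?thesis by (simp add: Kst_def)
  qed
  define h where "h z = (cmod (Kst s t z w))\<^sup>2" for z
  have hE: "h z = exp (2 * Re (a*z\<^sup>2 + b*z + e)) / cmod s" for z
    unfolding h_def KE normsq_exp ..
  have hol: "(\<lambda>z. Kst s t z w) holomorphic_on UNIV"
    unfolding Kst_def using s0 by (intro holomorphic_intros) auto
  have hfun: "h = (\<lambda>z. exp (2 * Re (a*z\<^sup>2 + b*z + e)) / cmod s)"
    using hE by (intro ext) simp
  have hmeas: "h \<in> borel_measurable borel"
    unfolding hfun using s0 by (intro borel_measurable_continuous_onI continuous_intros) auto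
  have hmeas': "h \<in> borel_measurable gauss_measure"
    by (subst measurable_cong_sets[OF gauss_sets refl]) (rule hmeas)
  have dmeas0: "(\<lambda>z::complex. exp (- (cmod z)\<^sup>2) / pi) \<in> borel_measurable borel"
    by (intro borel_measurable_continuous_onI continuous_intros) simp
  have dmeas: "(\<lambda>z::complex. ennreal (exp (- (cmod z)\<^sup>2) / pi)) \<in> borel_measurable lborel"
    using dmeas0 by measurable
  have pw: "ennreal (exp (- (cmod z)\<^sup>2) / pi) * ennreal (norm (h z)) = ennreal c * ennreal (exp (G z))" for z
  proof -
    have "exp (- (cmod z)\<^sup>2) / pi * norm (h z) = c * exp (G z)"
      unfolding hE G_def c_def using s0
      by (simp add: exp_diff exp_add field_simps exp_minus)
    then show ?thesis
      using c0 by (simp add: ennreal_mult[symmetric])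
  qed
  have Gmeas0: "(\<lambda>z. exp (G z)) \<in> borel_measurable borel"
    unfolding G_def by (intro borel_measurable_continuous_onI continuous_intros)
  have Gmeas: "(\<lambda>z. ennreal (exp (G z))) \<in> borel_measurable borel"
    using Gmeas0 by measurable
  have "(\<lambda>z. Kst s t z w) \<in> fock_space \<longleftrightarrow> integrable gauss_measure h"
    using hol unfolding fock_space_def h_def by simp
  also have "\<dots> \<longleftrightarrow> (\<integral>\<^sup>+z. ennreal (norm (h z)) \<partial>gauss_measure) < \<infinity>"
    using hmeas' by (simp add: integrable_iff_bounded)
  also have "(\<integral>\<^sup>+z. ennreal (norm (h z)) \<partial>gauss_measure) = (\<integral>\<^sup>+z. ennreal c * ennreal (exp (G z)) \<partial>lborel)"
    unfolding gauss_measure_def using hmeas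
    using pw by (subst nn_integral_density) (auto simp: dmeas)
  also have "\<dots> = ennreal c * (\<integral>\<^sup>+z. ennreal (exp (G z)) \<partial>lborel)"
    using Gmeas by (subst nn_integral_cmult) auto
  also have "\<dots> < \<infinity> \<longleftrightarrow> (\<integral>\<^sup>+z. ennreal (exp (G z)) \<partial>lborel) < \<infinity>"
    using c0 by (auto simp: ennreal_mult_less_top)
  also have "(\<integral>\<^sup>+z. ennreal (exp (G z)) \<partial>lborel) = (\<integral>\<^sup>+x. (\<integral>\<^sup>+y. ennreal (exp (G (Complex x y))) \<partial>lborel) \<partial>lborel)"
    using Gmeas by (rule nn_complex)
  also have "\<dots> = (\<integral>\<^sup>+x. (\<integral>\<^sup>+y. ennreal (exp ((2*Re a - 1)*x\<^sup>2 + 2*(-2*Im a)*x*y + (-2*Re a - 1)*y\<^sup>2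
        + (2*Re b)*x + (-2*Im b)*y + 2*Re e)) \<partial>lborel) \<partial>lborel)"
  proof -
    have "G (Complex x y) = (2*Re a - 1)*x\<^sup>2 + 2*(-2*Im a)*x*y + (-2*Re a - 1)*y\<^sup>2
        + (2*Re b)*x + (-2*Im b)*y + 2*Re e" for x y
      unfolding G_def by (simp add: power2_eq_square algebra_simps cmod_def)
    then show ?thesis by simp
  qed
  also have "\<dots> < \<infinity> \<longleftrightarrow> ((-2*Re a - 1) < 0 \<and> (2*Re a - 1)*(-2*Re a - 1) - (-2*Im a)\<^sup>2 > 0)"
    by (rule quad_fin)
  also have "\<dots> \<longleftrightarrow> cmod t < cmod s"
  proof -
    have na: "cmod a = cmod t / (2 * cmod s)" by (simp add: a_def norm_divide)
    have q: "(2*Re a - 1)*(-2*Re a - 1) - (-2*Im a)\<^sup>2 = 1 - 4 * (cmod a)\<^sup>2"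
      unfolding cmod_power2 by (simp add: algebra_simps power2_eq_square)
    have sp: "cmod s > 0" using s0 by simp
    have "cmod t < cmod s \<longleftrightarrow> cmod a < 1/2" using sp by (simp add: na field_simps)
    also have "\<dots> \<longleftrightarrow> (cmod a)\<^sup>2 < (1/2)\<^sup>2"
    proof
      assume "cmod a < 1/2" then show "(cmod a)\<^sup>2 < (1/2)\<^sup>2"
        by (intro power_strict_mono) auto
    next
      assume "(cmod a)\<^sup>2 < (1/2)\<^sup>2" then show "cmod a < 1/2"
        by (rule power_less_imp_less_base) simp
    qed
    finally have e1: "cmod t < cmod s \<longleftrightarrow> 1 - 4 * (cmod a)\<^sup>2 > 0" by (simp add: power2_eq_square algebra_simps)
    have "\<bar>Re a\<bar> \<le> cmod a" by (rule abs_Re_le_cmod)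
    moreover have "cmod a < 1/2 \<Longrightarrow> -2*Re a - 1 < 0" using calculation by linarith
    ultimately show ?thesis unfolding q e1
      using \<open>cmod t < cmod s \<longleftrightarrow> cmod a < 1/2\<close> e1 by auto
  qed
  finally show ?thesis .
qed

theorem lemma1:
  fixes s t :: complex
  assumes "s \<noteq> 0"
  shows "(\<forall>z w. s + of_real (cmod s) \<noteq> 0 \<longrightarrow> cnj (Kst s t z w) = Kst (cnj s) (- t) w z)
       \<and> (\<forall>z w. Im s = 0 \<and> Re s < 0 \<longrightarrow> cnj (Kst s t z w) = - Kst (cnj s) (- t) w z)
       \<and> (\<forall>w. (\<lambda>z. Kst s t z w) \<in> fock_space \<longleftrightarrow> cmod t < cmod s)"
  using partA1 partA2 partB[OF assms] by blast

end
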